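(* For all complex $q$ with $|q|<1$, $$F^{\rm ed}_{\rm od}(-q)=-\frac{q\,(q;q)_\infty(-q^2;q^2)_\infty}{(q^2;q^2)_\infty^2}\sum_{n=0}^\infty\sum_{m=0}^\infty(-1)^m q^{\frac{n(n+3)}{2}+2nm+2m^2+2m}\left(1+q^{2m+1}\right).$$
   Context: For $n\in\mathbb N_0\cup\{\infty\}$, $(a;q)_n:=\prod_{j=0}^{n-1}(1-aq^j)$. Define $$F^{\rm ed}_{\rm od}(q):=\sum_{n=0}^\infty q^{2n+1}(-q;q^2)_n(-q^{2n+2};q^2)_\infty,$$ and $F^{\rm ed}_{\rm od}(-q)$ denotes this function evaluated at $-q$. *)

theory Defs
  imports "HOL-Analysis.Analysis"
begin

definition qpoch :: "complex \<Rightarrow> complex \<Rightarrow> nat \<Rightarrow> complex" where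
  "qpoch a q n = (\<Prod>j<n. 1 - a * q ^ j)"

definition qpoch_inf :: "complex \<Rightarrow> complex \<Rightarrow> complex" where
  "qpoch_inf a q = (\<Prod>j. 1 - a * q ^ j)"

definition F_ed_od :: "complex \<Rightarrow> complex" where
  "F_ed_od q = (\<Sum>n. q ^ (2*n+1) * qpoch (-q) (q^2) n * qpoch_inf (- (q ^ (2*n+2))) (q^2))"

end

theory Submission
  imports Defs
begin


lemma qpoch_0[simp]: "qpoch a b 0 = 1" by (simp add: qpoch_def)
lemma qpoch_Suc: "qpoch a b (Suc n) = qpoch a b n * (1 - a * b ^ n)"
  by (simp add: qpoch_def)

lemma qpoch_convprod:
  fixes a b :: complex
  assumes "norm b < 1"
  shows "convergent_prod (\<lambda>j. 1 - a * b ^ j)"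
proof -
  have "summable (\<lambda>j. norm a * norm b ^ j)"
    using assms by (intro summable_mult summable_geometric) auto
  moreover have "(\<lambda>j. norm ((1 - a * b ^ j) - 1)) = (\<lambda>j. norm a * norm b ^ j)"
    by (simp add: norm_mult norm_power)
  ultimately have "summable (\<lambda>j. norm ((1 - a * b ^ j) - 1))" by simp
  then show ?thesis
    by (intro abs_convergent_prod_imp_convergent_prod summable_imp_abs_convergent_prod)
qed

lemma qpoch_tendsto:
  assumes "norm b < 1"
  shows "(\<lambda>n. qpoch a b n) \<longlonglongrightarrow> qpoch_inf a b"
proof -
  have "(\<lambda>n. \<Prod>j\<le>n. 1 - a * b ^ j) \<longlonglongrightarrow> qpoch_inf a b"
    unfolding qpoch_inf_def by (rule convergent_prod_LIMSEQ[OF qpoch_convprod[OF assms]])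
  then have "(\<lambda>n. qpoch a b (Suc n)) \<longlonglongrightarrow> qpoch_inf a b"
    by (simp add: qpoch_def lessThan_Suc_atMost)
  then show ?thesis by (simp add: filterlim_sequentially_Suc)
qed

lemma qpoch_inf_nonzero:
  assumes "norm b < 1" "norm a < 1"
  shows "qpoch_inf a b \<noteq> 0"
  unfolding qpoch_inf_def
proof (rule prodinf_nonzero[OF qpoch_convprod[OF assms(1)]])
  fix i
  have "norm (a * b ^ i) \<le> norm a"
    using assms by (simp add: norm_mult norm_power mult_left_le power_le_one)
  then have "norm (a * b ^ i) < 1" using assms by linarith
  then show "1 - a * b ^ i \<noteq> 0" by auto
qed

lemma qpoch_nonzero:
  assumes "norm b \<le> 1" "norm a < 1"
  shows "qpoch a b n \<noteq> 0"
proof -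
  have "1 - a * b ^ i \<noteq> 0" for i
  proof
    assume "1 - a * b ^ i = 0"
    then have "a * b ^ i = 1" by simp
    moreover have "norm (a * b ^ i) \<le> norm a"
      using assms by (simp add: norm_mult norm_power mult_left_le power_le_one)
    ultimately show False using assms by (metis norm_one not_le)
  qed
  then show ?thesis by (simp add: qpoch_def)
qed

lemma qpoch_add: "qpoch a b (n + m) = qpoch a b n * qpoch (a * b ^ n) b m"
  by (induction m) (simp_all add: qpoch_Suc power_add mult.assoc)

lemma qpoch_double: "qpoch a b (2 * n) = qpoch a (b^2) n * qpoch (a * b) (b^2) n"
proof (induction n)
  case (Suc n)
  have "qpoch a b (2 * Suc n) = qpoch a b (2*n) * (1 - a * b^(2*n)) * (1 - a * b^(Suc (2*n)))"
    by (simp add: qpoch_Suc)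
  have e1: "b^(2*n) = (b^2)^n" by (simp add: power_mult)
  have e2: "b^(Suc (2*n)) = b * (b^2)^n" by (simp add: power_mult)
  show ?case unfolding \<open>qpoch a b (2 * Suc n) = _\<close> Suc qpoch_Suc e1 e2
    by (simp add: algebra_simps)
qed simp

lemma qpoch_pm: "qpoch a b n * qpoch (-a) b n = qpoch (a^2) (b^2) n"
proof (induction n)
  case (Suc n)
  have e: "(b^2)^n = b^n * b^n" by (simp add: power2_eq_square power_mult_distrib)
  have "qpoch a b (Suc n) * qpoch (-a) b (Suc n) = (qpoch a b n * qpoch (-a) b n) * ((1 - a*b^n)*(1 + a*b^n))"
    by (simp add: qpoch_Suc algebra_simps)
  also have "\<dots> = qpoch (a^2) (b^2) (Suc n)" unfolding Suc qpoch_Suc e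
    by (simp add: algebra_simps power2_eq_square)
  finally show ?case .
qed simp

lemma qpoch_inf_split:
  assumes "norm b < 1"
  shows "qpoch_inf a b = qpoch a b n * qpoch_inf (a * b ^ n) b"
proof -
  have "(\<lambda>m. qpoch a b (m + n)) \<longlonglongrightarrow> qpoch_inf a b"
    by (rule LIMSEQ_ignore_initial_segment[OF qpoch_tendsto[OF assms]])
  moreover have "(\<lambda>m. qpoch a b (m + n)) \<longlonglongrightarrow> qpoch a b n * qpoch_inf (a * b ^ n) b"
    unfolding add.commute[of _ n] qpoch_add
    by (intro tendsto_mult tendsto_const qpoch_tendsto assms)
  ultimately show ?thesis by (rule LIMSEQ_unique)
qed

lemma qpoch_inf_double:
  assumes "norm b < 1"
  shows "qpoch_inf a b = qpoch_inf a (b^2) * qpoch_inf (a * b) (b^2)"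
proof -
  have nb: "norm (b^2) < 1" using assms by (simp add: norm_power power_less_one_iff abs_square_less_1)
  have "((\<lambda>n. qpoch a b n) \<circ> (\<lambda>n. 2 * n)) \<longlonglongrightarrow> qpoch_inf a b"
    by (rule LIMSEQ_subseq_LIMSEQ[OF qpoch_tendsto[OF assms]]) (simp add: strict_mono_def)
  moreover have "((\<lambda>n. qpoch a b n) \<circ> (\<lambda>n. 2 * n)) \<longlonglongrightarrow> qpoch_inf a (b^2) * qpoch_inf (a * b) (b^2)"
    unfolding o_def qpoch_double by (intro tendsto_mult qpoch_tendsto nb)
  ultimately show ?thesis by (rule LIMSEQ_unique)
qed

lemma qpoch_inf_pm:
  assumes "norm b < 1"
  shows "qpoch_inf a b * qpoch_inf (-a) b = qpoch_inf (a^2) (b^2)"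
proof -
  have nb: "norm (b^2) < 1" using assms by (simp add: norm_power power_less_one_iff abs_square_less_1)
  have "(\<lambda>n. qpoch a b n * qpoch (-a) b n) \<longlonglongrightarrow> qpoch_inf a b * qpoch_inf (-a) b"
    by (intro tendsto_mult qpoch_tendsto assms)
  moreover have "(\<lambda>n. qpoch a b n * qpoch (-a) b n) \<longlonglongrightarrow> qpoch_inf (a^2) (b^2)"
    unfolding qpoch_pm by (intro qpoch_tendsto nb)
  ultimately show ?thesis by (rule LIMSEQ_unique)
qed



fun C :: "nat \<Rightarrow> nat" where "C 0 = 0" | "C (Suc k) = C k + k"

lemma C2: "2 * C k + k = k * k"
  by (induction k) (simp_all add: algebra_simps)

lemma Cexp1: "C (Suc N) + C (N + j) = N * (N + j) + C j"
proof -
  have "2 * (C (Suc N) + C (N + j)) = 2 * (N * (N + j) + C j)"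
    using C2[of N] C2[of "N+j"] C2[of j] by (simp add: algebra_simps)
  then show ?thesis by simp
qed

lemma Cexp2: "C (Suc (k + j + 1)) + C k = (k + j + 1) * k + C (j + 2)"
proof -
  have "2 * (C (Suc (k + j + 1)) + C k) = 2 * ((k + j + 1) * k + C (j + 2))"
    using C2[of k] C2[of "k+j+1"] C2[of j] by (simp add: algebra_simps)
  then show ?thesis by simp
qed

definition gb :: "complex \<Rightarrow> nat \<Rightarrow> nat \<Rightarrow> complex" where
  "gb b N k = (if k \<le> N then qpoch b b N / (qpoch b b k * qpoch b b (N - k)) else 0)"

lemma pascal_alg:
  fixes x u v A B :: complex
  assumes "u \<noteq> 0" "v \<noteq> 0" "1 - A \<noteq> 0" "1 - B \<noteq> 0"
  shows "x * (1 - A * B) / (u * (1 - A) * (v * (1 - B))) = x / (u * (1 - A) * v) + B * (x / (u * (v * (1 - B))))"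
proof -
  define a where "a = 1 - A"
  define c where "c = 1 - B"
  have "a \<noteq> 0" "c \<noteq> 0" using assms a_def c_def by auto
  then have "x * (1 - (1-a) * (1-c)) / (u * a * (v * c)) = x / (u * a * v) + (1-c) * (x / (u * (v * c)))"
    using assms by (simp add: field_simps)
  then show ?thesis unfolding a_def c_def by simp
qed

locale qb = fixes b :: complex assumes nz: "\<And>n. qpoch b b n \<noteq> 0"
begin

lemma fac_nz: "1 - b * b ^ n \<noteq> 0"
  using nz[of "Suc n"] by (simp add: qpoch_Suc)

lemma gb_0[simp]: "gb b N 0 = 1" using nz[of N] by (simp add: gb_def)
lemma gb_N[simp]: "gb b N N = 1" using nz[of N] by (simp add: gb_def)
lemma gb_big: "N < k \<Longrightarrow> gb b N k = 0" by (simp add: gb_def)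

lemma pascal:
  assumes "k \<le> N"
  shows "gb b (Suc N) (Suc k) = gb b N (Suc k) + b ^ (N - k) * gb b N k"
proof (cases "k = N")
  case True
  then show ?thesis by (simp add: gb_big)
next
  case False
  define d where "d = N - k - 1"
  have N: "N = k + Suc d" using assms False unfolding d_def by arith
  have e1: "Suc N - Suc k = Suc d" "N - Suc k = d" "N - k = Suc d" using N by auto
  have s: "Suc k \<le> N" "Suc k \<le> Suc N" "k \<le> N" using N by auto
  note n1 = nz[of N] nz[of k] nz[of d] fac_nz[of k] fac_nz[of d] fac_nz[of N]
  have "gb b (Suc N) (Suc k) = qpoch b b N * (1 - b * b^N) / (qpoch b b k * (1 - b*b^k) * (qpoch b b d * (1 - b * b^d)))"
    using s by (simp add: gb_def e1 qpoch_Suc)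
  moreover have "gb b N (Suc k) + b ^ (N - k) * gb b N k =
     qpoch b b N / (qpoch b b k * (1 - b*b^k) * qpoch b b d) + b ^ (Suc d) * (qpoch b b N / (qpoch b b k * (qpoch b b d * (1 - b * b^d))))"
    using s by (simp add: gb_def e1 qpoch_Suc)
  moreover have "qpoch b b N * (1 - b * b^N) / (qpoch b b k * (1 - b*b^k) * (qpoch b b d * (1 - b * b^d))) =
     qpoch b b N / (qpoch b b k * (1 - b*b^k) * qpoch b b d) + b ^ (Suc d) * (qpoch b b N / (qpoch b b k * (qpoch b b d * (1 - b * b^d))))"
    using n1 pascal_alg[of "qpoch b b k" "qpoch b b d" "b*b^k" "b^Suc d" "qpoch b b N"]
    by (simp add: N power_add ac_simps)
  ultimately show ?thesis by simp
qed

lemma rothe: "qpoch (-z) b N = (\<Sum>k\<le>N. gb b N k * b ^ C k * z ^ k)"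
proof (induction N)
  case 0
  then show ?case by simp
next
  case (Suc N)
  define R where "R = (\<Sum>k\<le>N. gb b N k * b ^ C k * z ^ k)"
  have A: "(\<Sum>k\<le>N. gb b N (Suc k) * b ^ C (Suc k) * z ^ Suc k) = R - 1"
  proof -
    have "R = (\<Sum>k\<le>Suc N. gb b N k * b ^ C k * z ^ k)"
      unfolding R_def by (simp add: gb_big)
    also have "\<dots> = 1 + (\<Sum>k\<le>N. gb b N (Suc k) * b ^ C (Suc k) * z ^ Suc k)"
      by (subst sum.atMost_Suc_shift) simp
    finally show ?thesis by simp
  qed
  have B: "(\<Sum>k\<le>N. b ^ (N - k) * gb b N k * b ^ C (Suc k) * z ^ Suc k) = z * b ^ N * R"
    unfolding R_def sum_distrib_left
  proof (rule sum.cong)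
    fix k assume "k \<in> {..N}"
    then have "N - k + (C k + k) = N + C k" by simp
    then have "b ^ (N - k) * b ^ C (Suc k) = b ^ N * b ^ C k" by (simp add: power_add[symmetric])
    note eq = this
    have "b ^ (N - k) * gb b N k * b ^ C (Suc k) * z ^ Suc k = (b ^ (N - k) * b ^ C (Suc k)) * gb b N k * (z * z^k)"
      by (simp only: power_Suc mult_ac)
    also have "\<dots> = z * b ^ N * (gb b N k * b ^ C k * z ^ k)" unfolding eq by (simp only: mult_ac)
    finally show "b ^ (N - k) * gb b N k * b ^ C (Suc k) * z ^ Suc k = z * b ^ N * (gb b N k * b ^ C k * z ^ k)" .
  qed simp
  have "(\<Sum>k\<le>Suc N. gb b (Suc N) k * b ^ C k * z ^ k)
      = 1 + (\<Sum>k\<le>N. gb b (Suc N) (Suc k) * b ^ C (Suc k) * z ^ Suc k)"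
    by (subst sum.atMost_Suc_shift) simp
  also have "\<dots> = 1 + (\<Sum>k\<le>N. gb b N (Suc k) * b ^ C (Suc k) * z ^ Suc k
                     + b ^ (N - k) * gb b N k * b ^ C (Suc k) * z ^ Suc k)"
  proof (intro arg_cong[where f="\<lambda>x. 1 + x"] sum.cong refl)
    fix k assume "k \<in> {..N}"
    then have "k \<le> N" by simp
    then show "gb b (Suc N) (Suc k) * b ^ C (Suc k) * z ^ Suc k = gb b N (Suc k) * b ^ C (Suc k) * z ^ Suc k
                     + b ^ (N - k) * gb b N k * b ^ C (Suc k) * z ^ Suc k"
      by (simp only: pascal distrib_right)
  qed
  also have "\<dots> = R + z * b ^ N * R" unfolding sum.distrib A B by simp
  also have "\<dots> = qpoch (-z) b (Suc N)" by (simp add: qpoch_Suc Suc.IH[folded R_def] algebra_simps)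
  finally show ?case by simp
qed

end



lemma helper1:
  fixes X Y P Z zN zj g :: complex
  assumes "X * Y = P * Z" "P \<noteq> 0" "zN \<noteq> 0"
  shows "X / zN * (g * Y * (zN * zj / P)) = g * Z * zj"
proof -
  have "X / zN * (g * Y * (zN * zj / P)) = (X * Y) * g * zj / P" using assms by (simp add: field_simps)
  also have "\<dots> = g * Z * zj" using assms by (simp add: field_simps)
  finally show ?thesis .
qed

lemma helper2:
  fixes X Y P Z zk zj g :: complex
  assumes "X * Y = P * Z" "P \<noteq> 0" "zk \<noteq> 0" "zj \<noteq> 0"
  shows "X / (zk * zj) * (g * Y * (zk / P)) = g * Z / zj"
proof -
  have "X / (zk * zj) * (g * Y * (zk / P)) = (X * Y) * g / (P * zj)" using assms by (simp add: field_simps)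
  also have "\<dots> = g * Z / zj" using assms by (simp add: field_simps)
  finally show ?thesis .
qed

lemma sum_split2:
  fixes f :: "nat \<Rightarrow> 'a::comm_monoid_add" and M :: nat
  shows "(\<Sum>k\<le>N+M. f k) = (\<Sum>k<N. f k) + (\<Sum>j\<le>M. f (N+j))"
  by (induction M) (simp_all add: lessThan_Suc_atMost[symmetric] add.assoc)

context qb
begin

lemma prodrev:
  assumes "b \<noteq> 0" "z \<noteq> 0"
  shows "(\<Prod>i<N. (1 + z / b^(Suc i))) * b^(C (Suc N)) = z^N * qpoch (-b/z) b N"
proof (induction N)
  case (Suc N)
  have e: "(1 + z / b^Suc N) * b^Suc N = b^Suc N + z" using assms by (simp add: field_simps)
  have "(\<Prod>i<Suc N. (1 + z / b^(Suc i))) * b^(C (Suc (Suc N)))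
      = ((\<Prod>i<N. (1 + z / b^(Suc i))) * b^(C (Suc N))) * ((1 + z / b^Suc N) * b^Suc N)"
    by (simp add: power_add ac_simps)
  also have "\<dots> = z^N * qpoch (-b/z) b N * (b^Suc N + z)" unfolding Suc e ..
  also have "\<dots> = z^Suc N * qpoch (-b/z) b (Suc N)" using assms by (simp add: qpoch_Suc field_simps)
  finally show ?case .
qed simp

lemma prodre:
  assumes "b \<noteq> 0"
  shows "qpoch (-(z/b^N)) b N = (\<Prod>i<N. (1 + z / b^(Suc i)))"
proof -
  have "qpoch (-(z/b^N)) b N = (\<Prod>i<N. 1 + z / b^N * b^i)" by (simp add: qpoch_def)
  also have "\<dots> = (\<Prod>i<N. 1 + z / b^N * b^(N - Suc i))" by (rule prod.nat_diff_reindex[symmetric])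
  also have "\<dots> = (\<Prod>i<N. (1 + z / b^(Suc i)))"
  proof (rule prod.cong)
    fix i assume "i \<in> {..<N}"
    then have "N = (N - Suc i) + Suc i" by simp
    then have "b^N = b^(N - Suc i) * b^(Suc i)" by (metis power_add)
    then show "1 + z / b^N * b^(N - Suc i) = 1 + z / b^(Suc i)" using assms by (simp add: field_simps)
  qed simp
  finally show ?thesis .
qed

lemma fjtp:
  assumes b0: "b \<noteq> 0" and z0: "z \<noteq> 0"
  shows "qpoch (-z) b N * qpoch (-b/z) b N =
     (\<Sum>j\<le>N. gb b (2*N) (N+j) * b^(C j) * z^j) + (\<Sum>j<N. gb b (2*N) (N - Suc j) * b^(C (j+2)) / z^(j+1))"
proof -
  define w where "w = z / b^N"
  define X where "X = b^C(Suc N) / z^N"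
  have r: "qpoch (-w) b (N+N) = (\<Sum>k\<le>N+N. gb b (N+N) k * b^C k * w^k)" by (rule rothe)
  have "-w * b^N = -z" using b0 unfolding w_def by simp
  then have sp: "qpoch (-w) b (N+N) = qpoch (-w) b N * qpoch (-z) b N" by (simp add: qpoch_add)
  have pr: "qpoch (-w) b N * b^(C(Suc N)) = z^N * qpoch(-b/z) b N"
    unfolding w_def prodre[OF b0] by (rule prodrev[OF b0 z0])
  have "qpoch (-z) b N * qpoch (-b/z) b N = X * qpoch (-w) b (N+N)"
    unfolding sp X_def using pr z0 by (simp add: field_simps)
  also have "\<dots> = X * ((\<Sum>j<N. gb b (N+N) (N - Suc j) * b^C (N - Suc j) * w^(N - Suc j))
                     + (\<Sum>j\<le>N. gb b (N+N) (N+j) * b^C (N+j) * w^(N+j)))"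
    unfolding r sum_split2 sum.nat_diff_reindex[where g="\<lambda>k. gb b (N+N) k * b^C k * w^k", symmetric] ..
  also have "\<dots> = (\<Sum>j<N. X * (gb b (N+N) (N - Suc j) * b^C (N - Suc j) * w^(N - Suc j)))
                     + (\<Sum>j\<le>N. X * (gb b (N+N) (N+j) * b^C (N+j) * w^(N+j)))"
    by (simp add: sum_distrib_left distrib_left)
  also have "(\<Sum>j\<le>N. X * (gb b (N+N) (N+j) * b^C (N+j) * w^(N+j))) = (\<Sum>j\<le>N. gb b (2*N) (N+j) * b^(C j) * z^j)"
  proof (rule sum.cong)
    fix j assume "j \<in> {..N}"
    have e1: "b^C(Suc N) * b^C (N+j) = b^(N*(N+j)) * b^C j" by (simp only: power_add[symmetric] Cexp1)
    have e2: "w^(N+j) = z^N * z^j / b^(N*(N+j))" unfolding w_def by (simp add: power_divide power_mult power_add)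
    show "X * (gb b (N+N) (N+j) * b^C (N+j) * w^(N+j)) = gb b (2*N) (N+j) * b^(C j) * z^j"
      unfolding X_def mult_2 e2 by (rule helper1[OF e1]) (use b0 z0 in simp_all)
  qed simp
  also have "(\<Sum>j<N. X * (gb b (N+N) (N - Suc j) * b^C (N - Suc j) * w^(N - Suc j))) = 
      (\<Sum>j<N. gb b (2*N) (N - Suc j) * b^(C (j+2)) / z^(j+1))"
  proof (rule sum.cong)
    fix j assume "j \<in> {..<N}"
    then obtain k where N: "N = k + j + 1" by (metis add.commute add_Suc_right lessThan_iff less_imp_Suc_add Suc_eq_plus1)
    then have k: "N - Suc j = k" by simp
    have e1: "b^C(Suc N) * b^C k = b^(N*k) * b^C (j+2)" unfolding N by (simp only: power_add[symmetric] Cexp2)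
    have e2: "w^k = z^k / b^(N*k)" unfolding w_def by (simp add: power_divide power_mult)
    have e3: "z^N = z^k * z^(j+1)" unfolding N by (simp add: power_add)
    show "X * (gb b (N+N) (N - Suc j) * b^C (N - Suc j) * w^(N - Suc j)) = gb b (2*N) (N - Suc j) * b^(C (j+2)) / z^(j+1)"
      unfolding X_def mult_2 k e2 e3 by (rule helper2[OF e1]) (use b0 z0 in simp_all)
  qed simp
  finally show ?thesis by (simp add: add.commute)
qed

end


locale qbl =
  fixes b :: complex assumes nb: "norm b < 1"
begin

lemma nzq: "qpoch b b n \<noteq> 0" using nb by (intro qpoch_nonzero) auto
lemma Pnz: "qpoch_inf b b \<noteq> 0" using nb by (intro qpoch_inf_nonzero) auto

sublocale qb b by unfold_locales (rule nzq)

lemma lim_comp: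
  assumes "filterlim g sequentially sequentially"
  shows "(\<lambda>N. qpoch b b (g N)) \<longlonglongrightarrow> qpoch_inf b b"
  using filterlim_compose[OF qpoch_tendsto[OF nb] assms] .

lemma gb_lim1: "(\<lambda>N. gb b (2*N) (N+j)) \<longlonglongrightarrow> 1 / qpoch_inf b b"
proof -
  have "(\<lambda>N. qpoch b b (2*N) / (qpoch b b (N+j) * qpoch b b (N-j))) \<longlonglongrightarrow>
        qpoch_inf b b / (qpoch_inf b b * qpoch_inf b b)"
    by (intro tendsto_divide tendsto_mult lim_comp filterlim_subseq filterlim_minus_const_nat_at_top
        filterlim_add_const_nat_at_top filterlim_ident)
       (auto simp: strict_mono_def Pnz)
  moreover have "eventually (\<lambda>N. qpoch b b (2*N) / (qpoch b b (N+j) * qpoch b b (N-j)) = gb b (2*N) (N+j)) sequentially"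
    using eventually_ge_at_top[of j]
    by eventually_elim (simp add: gb_def)
  ultimately show ?thesis using Pnz by (auto intro: Lim_transform_eventually)
qed

lemma gb_lim2: "(\<lambda>N. gb b (2*N) (N - Suc j)) \<longlonglongrightarrow> 1 / qpoch_inf b b"
proof -
  have "(\<lambda>N. qpoch b b (2*N) / (qpoch b b (N - Suc j) * qpoch b b (N + Suc j))) \<longlonglongrightarrow>
        qpoch_inf b b / (qpoch_inf b b * qpoch_inf b b)"
    by (intro tendsto_divide tendsto_mult lim_comp filterlim_subseq filterlim_minus_const_nat_at_top
        filterlim_add_const_nat_at_top filterlim_ident)
       (auto simp: strict_mono_def Pnz)
  moreover have "eventually (\<lambda>N. qpoch b b (2*N) / (qpoch b b (N - Suc j) * qpoch b b (N + Suc j)) = gb b (2*N) (N - Suc j)) sequentially"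
    using eventually_ge_at_top[of "Suc j"]
    by eventually_elim (simp add: gb_def)
  ultimately show ?thesis using Pnz by (auto intro: Lim_transform_eventually)
qed

lemma gb_bound: obtains K where "K > 0" "\<And>N k. norm (gb b N k) \<le> K"
proof -
  have "convergent (\<lambda>n. qpoch b b n)" using qpoch_tendsto[OF nb] by (auto simp: convergent_def)
  then obtain K1 where K1: "K1 > 0" "\<And>n. norm (qpoch b b n) \<le> K1"
    by (metis convergent_imp_Bseq BseqE)
  have "convergent (\<lambda>n. inverse (qpoch b b n))"
    using tendsto_inverse[OF qpoch_tendsto[OF nb] Pnz] by (auto simp: convergent_def)
  then obtain K2 where K2: "K2 > 0" "\<And>n. norm (inverse (qpoch b b n)) \<le> K2"
    by (metis convergent_imp_Bseq BseqE)
  have "norm (gb b N k) \<le> K1 * (K2 * K2)" for N k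
  proof (cases "k \<le> N")
    case True
    then have "gb b N k = qpoch b b N * (inverse (qpoch b b k) * inverse (qpoch b b (N-k)))"
      by (simp add: gb_def field_simps)
    then have "norm (gb b N k) = norm (qpoch b b N) * (norm (inverse (qpoch b b k)) * norm (inverse (qpoch b b (N-k))))"
      by (simp add: norm_mult)
    also have "\<dots> \<le> K1 * (K2 * K2)"
      by (intro mult_mono K1 K2 mult_nonneg_nonneg norm_ge_zero) (use K1 K2 in auto)
    finally show ?thesis .
  next
    case False
    then show ?thesis using K1 K2 by (simp add: gb_def)
  qed
  then show ?thesis using that[of "K1 * (K2 * K2)"] K1 K2 by simp
qed

end


lemma tann_gen:
  fixes c :: "nat \<Rightarrow> complex" and h :: "nat \<Rightarrow> nat \<Rightarrow> complex"
  assumes sc: "summable (\<lambda>j. norm (c j))" and lim: "\<And>j. (\<lambda>N. h j N) \<longlonglongrightarrow> L"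
    and bd: "\<And>j N. norm (h j N) \<le> K"
    and ev: "\<And>j. eventually (\<lambda>N. P N j) sequentially"
  shows "(\<lambda>N. \<Sum>j. (if P N j then h j N * c j else 0)) \<longlonglongrightarrow> L * (\<Sum>j. c j)"
proof -
  have K0: "K \<ge> 0" using bd[of 0 0] norm_ge_zero order_trans by blast
  have "((\<lambda>N. \<Sum>j. (if P N j then h j N * c j else 0)) \<longlonglongrightarrow> (\<Sum>j. L * c j))"
  proof (rule tannerys_theorem[where M="\<lambda>j. K * norm (c j)", THEN conjunct2, THEN conjunct2])
    fix j
    have "(\<lambda>N. h j N * c j) \<longlonglongrightarrow> L * c j" by (intro tendsto_mult lim tendsto_const)
    moreover have "eventually (\<lambda>N. h j N * c j = (if P N j then h j N * c j else 0)) sequentially"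
      using ev[of j] by eventually_elim simp
    ultimately show "(\<lambda>N. if P N j then h j N * c j else 0) \<longlonglongrightarrow> L * c j"
      by (rule Lim_transform_eventually)
  next
    show "eventually (\<lambda>(j, N). norm (if P N j then h j N * c j else 0) \<le> K * norm (c j)) (at_top \<times>\<^sub>F sequentially)"
    proof (intro always_eventually allI, clarify)
      fix j N
      show "norm (if P N j then h j N * c j else 0) \<le> K * norm (c j)"
        using bd[of j N] K0 by (auto simp: norm_mult intro: mult_right_mono)
    qed
  next
    show "summable (\<lambda>j. K * norm (c j))" using sc by (rule summable_mult)
  qed simp
  also have "(\<Sum>j. L * c j) = L * (\<Sum>j. c j)"
    using summable_norm_cancel[OF sc] by (rule suminf_mult)
  finally show ?thesis .
qed

context qbl begin

lemma jtp:
  assumes b0: "b \<noteq> 0" and z0: "z \<noteq> 0"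
    and s1: "summable (\<lambda>j. norm (b^C j * z^j))"
    and s2: "summable (\<lambda>j. norm (b^C (j+2) / z^(j+1)))"
  shows "qpoch_inf (-z) b * qpoch_inf (-b/z) b * qpoch_inf b b =
         (\<Sum>j. b^C j * z^j) + (\<Sum>j. b^C (j+2) / z^(j+1))"
proof -
  obtain K where K: "K > 0" "\<And>N k. norm (gb b N k) \<le> K" by (rule gb_bound) blast
  have t1: "(\<lambda>N. \<Sum>j. (if j \<le> N then gb b (2*N) (N+j) * (b^C j * z^j) else 0)) \<longlonglongrightarrow> 1 / qpoch_inf b b * (\<Sum>j. b^C j * z^j)"
    by (rule tann_gen[OF s1 gb_lim1 K(2)]) (rule eventually_ge_at_top)
  have t2: "(\<lambda>N. \<Sum>j. (if j < N then gb b (2*N) (N - Suc j) * (b^C (j+2) / z^(j+1)) else 0)) \<longlonglongrightarrow> 1 / qpoch_inf b b * (\<Sum>j. b^C (j+2) / z^(j+1))"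
    by (rule tann_gen[OF s2 gb_lim2 K(2)]) (rule eventually_gt_at_top)
  have e1: "(\<Sum>j. (if j \<le> N then gb b (2*N) (N+j) * (b^C j * z^j) else 0)) = (\<Sum>j\<le>N. gb b (2*N) (N+j) * b^(C j) * z^j)" for N
    by (subst suminf_finite[of "{..N}"]) (auto simp: mult.assoc)
  have e2: "(\<Sum>j. (if j < N then gb b (2*N) (N - Suc j) * (b^C (j+2) / z^(j+1)) else 0)) = (\<Sum>j<N. gb b (2*N) (N - Suc j) * b^(C (j+2)) / z^(j+1))" for N
    by (subst suminf_finite[of "{..<N}"]) (auto simp: mult.assoc)
  have "(\<lambda>N. qpoch (-z) b N * qpoch (-b/z) b N) \<longlonglongrightarrow> 1 / qpoch_inf b b * (\<Sum>j. b^C j * z^j) + 1 / qpoch_inf b b * (\<Sum>j. b^C (j+2) / z^(j+1))"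
    unfolding fjtp[OF b0 z0] using tendsto_add[OF t1 t2] unfolding e1 e2 .
  moreover have "(\<lambda>N. qpoch (-z) b N * qpoch (-b/z) b N) \<longlonglongrightarrow> qpoch_inf (-z) b * qpoch_inf (-b/z) b"
    by (intro tendsto_mult qpoch_tendsto nb)
  ultimately have "qpoch_inf (-z) b * qpoch_inf (-b/z) b = 1 / qpoch_inf b b * (\<Sum>j. b^C j * z^j) + 1 / qpoch_inf b b * (\<Sum>j. b^C (j+2) / z^(j+1))"
    using LIMSEQ_unique by blast
  then show ?thesis using Pnz by (simp add: field_simps)
qed

end


definition ee :: "nat \<Rightarrow> nat \<Rightarrow> nat" where
  "ee n m = n*(n+3) div 2 + 2*n*m + 2*m^2 + 2*m"

lemma ee_shift: "ee (n+2) m = ee n (m+1) + 1"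
proof -
  have "(n+2)*(n+2+3) = n*(n+3) + 2*(2*n+5)" by (simp add: algebra_simps)
  then have "(n+2)*(n+2+3) div 2 = n*(n+3) div 2 + (2*n+5)" by simp
  then show ?thesis unfolding ee_def by (simp add: algebra_simps power2_eq_square)
qed

lemma ee_ge: "n + m \<le> ee n m"
proof -
  have "2*n \<le> n*(n+3)" by (simp add: algebra_simps)
  then have "n \<le> n*(n+3) div 2" by linarith
  then show ?thesis unfolding ee_def by simp
qed

lemma pow_le:
  fixes q :: complex
  assumes "norm q < 1" "k \<le> e"
  shows "norm (q ^ e) \<le> norm q ^ k"
  unfolding norm_power using assms by (intro power_decreasing) auto

lemma geo_summable:
  fixes g :: "nat \<Rightarrow> complex"
  assumes "norm q < 1" "\<And>m. norm (g m) \<le> norm q ^ m"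
  shows "summable g" "summable (\<lambda>m. norm (g m))"
proof -
  have sg: "summable (\<lambda>m. norm q ^ m)" using assms by (intro summable_geometric) simp
  show "summable (\<lambda>m. norm (g m))" by (rule summable_comparison_test[OF _ sg]) (use assms in auto)
  then show "summable g" by (rule summable_norm_cancel)
qed

lemma row_lemma:
  fixes g :: "nat \<Rightarrow> nat \<Rightarrow> complex"
  assumes q1: "norm q < 1" and bd: "\<And>n m. norm (g n m) \<le> norm q ^ (n + m)"
  shows "\<And>n. summable (\<lambda>m. g n m)" "summable (\<lambda>n. \<Sum>m. g n m)" "(\<lambda>n. \<Sum>m. g n m) \<longlonglongrightarrow> 0"
proof -
  let ?r = "norm q"
  have r0: "0 \<le> ?r" by simp
  have bd': "norm (g n m) \<le> ?r ^ n * ?r ^ m" for n m using bd[of n m] by (simp add: power_add)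
  have sg: "summable (\<lambda>m. ?r ^ m)" using q1 by (intro summable_geometric) simp
  have sn: "summable (\<lambda>m. norm (g n m))" for n
    by (rule summable_comparison_test[OF _ summable_mult[OF sg, of "?r ^ n"]]) (use bd' in auto)
  show "summable (\<lambda>m. g n m)" for n by (rule summable_norm_cancel[OF sn])
  have rb: "norm (\<Sum>m. g n m) \<le> ?r ^ n * (1 / (1 - ?r))" for n
  proof -
    have "norm (\<Sum>m. g n m) \<le> (\<Sum>m. norm (g n m))" by (rule summable_norm[OF sn])
    also have "\<dots> \<le> (\<Sum>m. ?r ^ n * ?r ^ m)"
      by (rule suminf_le[OF bd' sn summable_mult[OF sg]])
    also have "\<dots> = ?r ^ n * (1 / (1 - ?r))"
      using suminf_mult[OF sg, of "?r ^ n"] suminf_geometric[of ?r] q1 by simp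
    finally show ?thesis .
  qed
  have sg2: "summable (\<lambda>n. ?r ^ n * (1 / (1 - ?r)))" by (rule summable_mult2[OF sg])
  have "summable (\<lambda>n. norm (\<Sum>m. g n m))"
    by (rule summable_comparison_test[OF _ sg2]) (use rb in auto)
  then show "summable (\<lambda>n. \<Sum>m. g n m)" by (rule summable_norm_cancel)
  then show "(\<lambda>n. \<Sum>m. g n m) \<longlonglongrightarrow> 0" by (rule summable_LIMSEQ_zero)
qed



lemma S_eval:
  fixes q :: complex
  assumes q1: "norm q < 1"
  shows "(1+q) * (\<Sum>n. \<Sum>m. (-1)^m * q^(ee n m) * (1 + q^(2*m+1)))
       = 2 * (\<Sum>n. q^(ee n 0 + 1)) + 1 + 2 * (\<Sum>m. (-1)^m * q^(2*(m+1)*(m+1)))"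
proof -
  define a where "a n m = (-1)^m * q^(ee n m)" for n m
  define bb where "bb n m = (-1)^m * q^(ee n m + 2*m+1)" for n m
  define Ar where "Ar n = (\<Sum>m. a n m)" for n
  define Br where "Br n = (\<Sum>m. bb n m)" for n
  define T where "T = (\<Sum>m. (-1)^m * q^(2*(m+1)*(m+1)))"
  define H where "H = (\<Sum>n. q^(ee n 0 + 1))"
  have na: "norm (a n m) \<le> norm q ^ (n+m)" for n m
    unfolding a_def by (simp add: norm_mult norm_power pow_le[OF q1 ee_ge, unfolded norm_power])
  have nb: "norm (bb n m) \<le> norm q ^ (n+m)" for n m
  proof -
    have "norm (q^(ee n m + 2*m+1)) \<le> norm q^(n+m)" by (rule pow_le[OF q1]) (use ee_ge[of n m] in simp)
    then show ?thesis by (simp add: bb_def norm_mult norm_power)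
  qed
  note RA = row_lemma[OF q1 na, folded Ar_def]
  note RB = row_lemma[OF q1 nb, folded Br_def]
  have geo: "summable g" if "\<And>m. norm (g m) \<le> norm q ^ m" for g :: "nat \<Rightarrow> complex"
    using geo_summable[OF q1 that] by blast
  have sa0: "summable (\<lambda>n. a n 0)" by (rule geo) (use na[of _ 0] in simp)
  have sb0: "summable (\<lambda>n. bb n 0)" by (rule geo) (use nb[of _ 0] in simp)
  have Sdec: "(\<Sum>n. \<Sum>m. (-1)^m * q^(ee n m) * (1 + q^(2*m+1))) = (\<Sum>n. Ar n + Br n)"
  proof (rule suminf_cong)
    fix n
    have "(\<lambda>m. (-1)^m * q^(ee n m) * (1 + q^(2*m+1))) = (\<lambda>m. a n m + bb n m)"
      unfolding a_def bb_def by (simp add: algebra_simps power_add)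
    then show "(\<Sum>m. (-1)^m * q^(ee n m) * (1 + q^(2*m+1))) = Ar n + Br n"
      unfolding Ar_def Br_def using suminf_add[OF RA(1)[of n] RB(1)[of n]] by simp
  qed
  have qa: "q * a n (Suc m) = - a (n+2) m" for n m
    unfolding a_def ee_shift by (simp add: algebra_simps)
  have qb: "q * bb (n+2) m = - bb n (Suc m)" for n m
    unfolding bb_def ee_shift by (simp add: algebra_simps)
  have rowA: "(1+q) * Ar n = (Ar n - Ar (Suc n)) + (Ar (Suc n) - Ar (Suc (Suc n))) + q * a n 0" for n
  proof -
    have s: "summable (\<lambda>m. q * a n m)" by (rule summable_mult[OF RA(1)])
    have "q * Ar n = (\<Sum>m. q * a n m)" unfolding Ar_def by (rule suminf_mult[OF RA(1), symmetric])
    also have "\<dots> = q * a n 0 + (\<Sum>m. q * a n (Suc m))" using suminf_split_head[OF s] by simp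
    also have "(\<Sum>m. q * a n (Suc m)) = - Ar (n+2)" unfolding qa Ar_def by (rule suminf_minus[OF RA(1)])
    finally show ?thesis by (simp add: algebra_simps)
  qed
  have rowB: "(1+q) * Br (Suc (Suc n)) = (Br (Suc (Suc n)) - Br n) + bb n 0" for n
  proof -
    have "q * Br (n+2) = (\<Sum>m. q * bb (n+2) m)" unfolding Br_def by (rule suminf_mult[OF RB(1), symmetric])
    also have "\<dots> = - (\<Sum>m. bb n (Suc m))" unfolding qb using RB(1)[of n]
      by (subst suminf_minus) (simp_all add: summable_Suc_iff)
    also have "(\<Sum>m. bb n (Suc m)) = Br n - bb n 0" unfolding Br_def by (rule suminf_split_head[OF RB(1)])
    finally show ?thesis by (simp add: algebra_simps)
  qed
  have sA: "(\<lambda>n. (1+q) * Ar n) sums (Ar 0 + Ar 1 + q * (\<Sum>n. a n 0))"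
  proof -
    have t1: "(\<lambda>n. Ar n - Ar (Suc n)) sums (Ar 0 - 0)" by (rule telescope_sums'[OF RA(3)])
    have t2: "(\<lambda>n. Ar (Suc n) - Ar (Suc (Suc n))) sums (Ar 1 - 0)"
      using telescope_sums'[OF LIMSEQ_Suc[OF RA(3)]] by simp
    have t3: "(\<lambda>n. q * a n 0) sums (q * (\<Sum>n. a n 0))" by (rule sums_mult[OF summable_sums[OF sa0]])
    show ?thesis unfolding rowA using sums_add[OF sums_add[OF t1 t2] t3] by simp
  qed
  have sB: "(\<lambda>n. (1+q) * Br n) sums (((\<Sum>n. bb n 0) - Br 0 - Br 1) + (1+q) * Br 0 + (1+q) * Br 1)"
  proof -
    have t1: "(\<lambda>n. Br (Suc n) - Br n) sums (0 - Br 0)" by (rule telescope_sums[OF RB(3)])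
    have t2: "(\<lambda>n. Br (Suc (Suc n)) - Br (Suc n)) sums (0 - Br 1)"
      using telescope_sums[OF LIMSEQ_Suc[OF RB(3)]] by simp
    have t3: "(\<lambda>n. bb n 0) sums (\<Sum>n. bb n 0)" by (rule summable_sums[OF sb0])
    have fe: "(\<lambda>n. (1+q) * Br (n + 2)) = (\<lambda>n. (Br (Suc n) - Br n) + (Br (Suc (Suc n)) - Br (Suc n)) + bb n 0)"
    proof
      fix n
      have "n + 2 = Suc (Suc n)" by simp
      then show "(1+q) * Br (n + 2) = (Br (Suc n) - Br n) + (Br (Suc (Suc n)) - Br (Suc n)) + bb n 0"
        using rowB[of n] by simp
    qed
    have "(\<lambda>n. (1+q) * Br (n + 2)) sums ((\<Sum>n. bb n 0) - Br 0 - Br 1)"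
      unfolding fe using sums_add[OF sums_add[OF t1 t2] t3] by (simp add: algebra_simps)
    then show ?thesis using sums_iff_shift[of "\<lambda>n. (1+q) * Br n" 2]
      by (simp add: numeral_2_eq_2 lessThan_Suc algebra_simps)
  qed
  have sS: "(\<lambda>n. Ar n + Br n) sums (\<Sum>n. Ar n + Br n)"
    by (rule summable_sums[OF summable_add[OF RA(2) RB(2)]])
  have "(1+q) * (\<Sum>n. Ar n + Br n) = (Ar 0 + Ar 1 + q * (\<Sum>n. a n 0)) + (((\<Sum>n. bb n 0) - Br 0 - Br 1) + (1+q) * Br 0 + (1+q) * Br 1)"
  proof (rule sums_unique2)
    show "(\<lambda>n. (1+q) * (Ar n + Br n)) sums ((1+q) * (\<Sum>n. Ar n + Br n))" by (rule sums_mult[OF sS])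
    show "(\<lambda>n. (1+q) * (Ar n + Br n)) sums ((Ar 0 + Ar 1 + q * (\<Sum>n. a n 0)) + (((\<Sum>n. bb n 0) - Br 0 - Br 1) + (1+q) * Br 0 + (1+q) * Br 1))"
      using sums_add[OF sA sB] by (simp add: distrib_left)
  qed
  also have "\<dots> = (Ar 0 + q * Br 1) + Ar 1 + q * Br 0 + (q * (\<Sum>n. a n 0) + (\<Sum>n. bb n 0))"
    by (simp add: algebra_simps)
  also have "q * (\<Sum>n. a n 0) + (\<Sum>n. bb n 0) = 2 * H"
  proof -
    have "q * (\<Sum>n. a n 0) = (\<Sum>n. q * a n 0)" by (rule suminf_mult[OF sa0, symmetric])
    also have "\<dots> = H" unfolding H_def a_def by (simp add: mult.commute)
    finally show ?thesis unfolding H_def bb_def by simp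
  qed
  also have "Ar 1 = T" unfolding Ar_def T_def a_def
    by (rule suminf_cong) (simp add: ee_def algebra_simps power2_eq_square)
  also have "q * Br 0 = T"
  proof -
    have "q * Br 0 = (\<Sum>m. q * bb 0 m)" unfolding Br_def by (rule suminf_mult[OF RB(1), symmetric])
    also have "\<dots> = T" unfolding T_def bb_def
      by (rule suminf_cong) (simp add: ee_def algebra_simps power2_eq_square)
    finally show ?thesis .
  qed
  also have "Ar 0 + q * Br 1 = 1"
  proof -
    define h where "h m = (-1)^m * q^(2*m*(m+1))" for m
    have "norm (q^(2*m*(m+1))) \<le> norm q^m" for m by (rule pow_le[OF q1]) (simp add: algebra_simps)
    then have "summable h" unfolding h_def
      by (intro geo) (simp add: norm_mult norm_power)
    then have h0: "h \<longlonglongrightarrow> 0" by (rule summable_LIMSEQ_zero)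
    have "q * Br 1 = (\<Sum>m. q * bb 1 m)" unfolding Br_def by (rule suminf_mult[OF RB(1), symmetric])
    then have "Ar 0 + q * Br 1 = (\<Sum>m. a 0 m + q * bb 1 m)" unfolding Ar_def
      using suminf_add[OF RA(1)[of 0] summable_mult[OF RB(1)[of 1]]] by simp
    also have "\<dots> = (\<Sum>m. h m - h (Suc m))"
      unfolding h_def a_def bb_def
      by (rule suminf_cong) (simp add: ee_def algebra_simps power2_eq_square)
    also have "\<dots> = 1" using telescope_sums'[OF h0] unfolding h_def by (simp add: sums_iff)
    finally show ?thesis .
  qed
  finally show ?thesis unfolding Sdec H_def T_def by simp
qed



lemma C_SS: "C (Suc (Suc j)) = ee j 0 + 1"
proof -
  have "2 * C (Suc (Suc j)) = 2 * (j*(j+3) div 2 + 1)"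
  proof -
    have "2 * C (Suc (Suc j)) + (j+2) = (j+2)*(j+2)" using C2[of "Suc (Suc j)"] by simp
    moreover have "2 * (j*(j+3) div 2) = j*(j+3)" by simp
    ultimately show ?thesis by (simp add: algebra_simps)
  qed
  then show ?thesis by (simp add: ee_def)
qed

lemma G1:
  fixes q :: complex
  assumes q1: "norm q < 1" and q0: "q \<noteq> 0"
  shows "qpoch_inf (-q) q * qpoch_inf (-q) q * qpoch_inf q q = (\<Sum>j. q ^ C (Suc j))"
proof -
  interpret qbl q by unfold_locales (rule q1)
  have c: "q^C j * q^j = q^C (Suc j)" for j by (simp add: power_add)
  have d: "q^C (j+2) / q^(j+1) = q^C (Suc j)" for j
  proof -
    have "C (j+2) = C (Suc j) + (j+1)" by simp
    then show ?thesis using q0 by (simp add: power_add)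
  qed
  have b: "norm (q ^ C (Suc j)) \<le> norm q ^ j" for j by (rule pow_le[OF q1]) simp
  have s: "summable (\<lambda>j. norm (q ^ C (Suc j)))" using geo_summable(2)[OF q1 b] .
  have "qpoch_inf (-q) q * qpoch_inf (-q/q) q * qpoch_inf q q = (\<Sum>j. q^C j * q^j) + (\<Sum>j. q^C (j+2) / q^(j+1))"
    by (rule jtp[OF q0 q0]) (simp_all only: c d s)
  also have "\<dots> = 2 * (\<Sum>j. q ^ C (Suc j))" by (simp only: c d) simp
  also have "qpoch_inf (-q/q) q = 2 * qpoch_inf (-q) q"
    using qpoch_inf_split[OF q1, of "-1" 1] q0 by (simp add: qpoch_def)
  finally show ?thesis by (simp add: mult.assoc)
qed

lemma helper3:
  fixes X B P D s :: complex
  assumes "X = B * P" "D = s * P" "P \<noteq> 0" "s * s = 1"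
  shows "X / D = s * B"
proof -
  have "s \<noteq> 0" using assms(4) by auto
  then show ?thesis using assms by (simp add: field_simps)
qed

lemma G2:
  fixes q :: complex
  assumes q1: "norm q < 1" and q0: "q \<noteq> 0"
  shows "qpoch_inf (q^2) (q^4) * qpoch_inf (q^2) (q^4) * qpoch_inf (q^4) (q^4) = 1 - 2 * (\<Sum>m. (-1)^m * q^(2*(m+1)*(m+1)))"
proof -
  have q4: "norm (q^4) < 1" using pow_le[OF q1, of 1 4] q1 by simp
  interpret qbl "q^4" by unfold_locales (rule q4)
  have z0: "-(q^2) \<noteq> 0" using q0 by simp
  have c: "(q^4)^C j * (-(q^2))^j = (-1)^j * q^(2*j*j)" for j
  proof -
    have "4 * C j + 2 * j = 2*j*j" using C2[of j] by (simp add: algebra_simps)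
    moreover have "(q^4)^C j * (q^2)^j = q^(4 * C j + 2 * j)"
      unfolding power_add power_mult ..
    ultimately have "(q^4)^C j * (q^2)^j = q^(2*j*j)" by simp
    moreover have "(-(q^2))^j = (-1)^j * (q^2)^j" by (rule power_minus)
    ultimately show ?thesis by (simp add: mult.assoc)
  qed
  have d: "(q^4)^C (j+2) / (-(q^2))^(j+1) = (-1)^(j+1) * q^(2*(j+1)*(j+1))" for j
  proof -
    have "2 * C (j+2) + (j+2) = (j+2)*(j+2)" using C2[of "j+2"] .
    then have e: "4 * C (j+2) = 2*(j+1)*(j+1) + 2*(j+1)" by (simp add: algebra_simps)
    have "(q^4)^C (j+2) = q^(4 * C (j+2))" unfolding power_mult ..
    also have "\<dots> = q^(2*(j+1)*(j+1) + 2*(j+1))" by (simp only: e)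
    also have "\<dots> = q^(2*(j+1)*(j+1)) * (q^2)^(j+1)" unfolding power_add power_mult ..
    finally have "(q^4)^C (j+2) = q^(2*(j+1)*(j+1)) * (q^2)^(j+1)" .
    moreover have "(-(q^2))^(j+1) = (-1)^(j+1) * (q^2)^(j+1)" by (rule power_minus)
    moreover have "(q^2)^(j+1) \<noteq> 0" using q0 by simp
    ultimately show ?thesis using helper3 by simp
  qed
  have bc: "norm ((-1::complex)^j * q^(2*j*j)) \<le> norm q ^ j" for j
  proof -
    have "norm (q^(2*j*j)) \<le> norm q ^ j" by (rule pow_le[OF q1]) (cases j, simp_all)
    then show ?thesis by (simp add: norm_mult norm_power)
  qed
  have bd: "norm ((-1::complex)^(j+1) * q^(2*(j+1)*(j+1))) \<le> norm q ^ j" for j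
  proof -
    have "norm (q^(2*(j+1)*(j+1))) \<le> norm q ^ j" by (rule pow_le[OF q1]) simp
    then show ?thesis by (simp add: norm_mult norm_power)
  qed
  note sc = geo_summable[OF q1 bc] and sd = geo_summable[OF q1 bd]
  have b0: "q^4 \<noteq> 0" using q0 by simp
  have s1: "summable (\<lambda>j. norm ((q^4)^C j * (-(q^2))^j))" unfolding c by (rule sc(2))
  have s2: "summable (\<lambda>j. norm ((q^4)^C (j+2) / (-(q^2))^(j+1)))" unfolding d by (rule sd(2))
  have J: "qpoch_inf (-(-(q^2))) (q^4) * qpoch_inf (-(q^4)/(-(q^2))) (q^4) * qpoch_inf (q^4) (q^4)
     = (\<Sum>j. (q^4)^C j * (-(q^2))^j) + (\<Sum>j. (q^4)^C (j+2) / (-(q^2))^(j+1))"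
    by (rule jtp[OF b0 z0 s1 s2])
  have q42: "q^4 = q^2 * q^2" by (simp only: power_add[symmetric]) simp
  have m1: "-(-(q^2)) = q^2" by simp
  have m2: "-(q^4)/(-(q^2)) = q^2"
  proof -
    have "-(q^4)/(-(q^2)) = (q^2*q^2)/q^2" by (simp only: q42 minus_divide_divide)
    also have "\<dots> = q^2" by (rule nonzero_mult_div_cancel_right) (use q0 in simp)
    finally show ?thesis .
  qed
  define T where "T = (\<Sum>m. (-1)^m * q^(2*(m+1)*(m+1)))"
  have r2: "(\<Sum>j. (q^4)^C (j+2) / (-(q^2))^(j+1)) = - T"
  proof -
    have "(\<Sum>j. (q^4)^C (j+2) / (-(q^2))^(j+1)) = (\<Sum>j. - ((-1)^j * q^(2*(j+1)*(j+1))))"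
      unfolding d by simp
    also have "\<dots> = - T" unfolding T_def
      by (rule suminf_minus) (rule summable_minus_iff[THEN iffD1], use sd(1) in simp)
    finally show ?thesis .
  qed
  have r1: "(\<Sum>j. (q^4)^C j * (-(q^2))^j) = 1 - T"
  proof -
    have "(\<Sum>j. (-1)^(Suc j) * q^(2*(Suc j)*(Suc j))) = (\<Sum>j. (-1)^j * q^(2*j*j)) - 1"
      using suminf_split_head[OF sc(1)] by simp
    moreover have "(\<Sum>j. (-1)^(Suc j) * q^(2*(Suc j)*(Suc j))) = - T"
      using r2 unfolding d by simp
    ultimately have h: "(\<Sum>j. (-1)^j * q^(2*j*j)) - 1 = - T" by simp
    then have "(\<Sum>j. (-1)^j * q^(2*j*j)) = 1 - T" by (metis add.commute diff_eq_eq uminus_add_conv_diff)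
    then show ?thesis unfolding c .
  qed
  show ?thesis using J unfolding m1 m2 r1 r2 T_def by simp
qed



lemma LHS:
  fixes q :: complex
  assumes q1: "norm q < 1"
  shows "F_ed_od (-q) = -q * qpoch_inf (-(q^2)) (q^2) * ((2 - qpoch_inf q (q^2) / qpoch_inf (-(q^2)) (q^2)) / (1+q))"
proof -
  define Q where "Q = q^2"
  define W where "W = qpoch_inf (-Q) Q"
  define X where "X = qpoch_inf q Q"
  have nQ: "norm Q < 1" unfolding Q_def using pow_le[OF q1, of 1 2] q1 by simp
  have nmQ: "norm (-Q) < 1" using nQ by simp
  have qnz: "qpoch (-Q) Q n \<noteq> 0" for n by (rule qpoch_nonzero) (use nQ nmQ in auto)
  have Wnz: "W \<noteq> 0" unfolding W_def by (rule qpoch_inf_nonzero[OF nQ nmQ])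
  have q1nz: "1 + q \<noteq> 0"
  proof
    assume "1 + q = 0"
    then have "q = -1" by (simp add: add_eq_0_iff)
    then show False using q1 by simp
  qed
  define u where "u n = qpoch q Q n / qpoch (-Q) Q n" for n
  define wf where "wf n = u n * (1 + Q^n)" for n
  have step: "(1+q) * (Q^n * u n) = wf n - wf (Suc n)" for n
  proof -
    have f: "1 - (-Q) * Q^n \<noteq> 0" using qnz[of "Suc n"] by (simp add: qpoch_Suc)
    have f': "1 + Q * Q^n \<noteq> 0" using f by simp
    have uS: "u (Suc n) * (1 + Q * Q^n) = u n * (1 - q * Q^n)"
    proof -
      have h: "\<And>A a P p :: complex. P \<noteq> 0 \<Longrightarrow> p \<noteq> 0 \<Longrightarrow> (A*a)/(P*p) * p = A/P * a"
        by (simp add: field_simps)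
      have "u (Suc n) = (qpoch q Q n * (1 - q * Q^n)) / (qpoch (-Q) Q n * (1 + Q * Q^n))"
        unfolding u_def qpoch_Suc by simp
      then show ?thesis unfolding u_def using h[OF qnz[of n] f'] by simp
    qed
    have "wf (Suc n) = u n * (1 - q * Q^n)" unfolding wf_def power_Suc uS ..
    then show ?thesis by (simp add: wf_def[of n] algebra_simps)
  qed
  have ul: "u \<longlonglongrightarrow> X / W" unfolding u_def X_def W_def
    by (intro tendsto_divide qpoch_tendsto nQ) (use Wnz W_def in simp)
  have wl: "wf \<longlonglongrightarrow> X / W * (1 + 0)" unfolding wf_def
    by (intro tendsto_mult ul tendsto_add tendsto_const LIMSEQ_power_zero nQ)
  have s1: "(\<lambda>n. (1+q) * (Q^n * u n)) sums (2 - X / W)"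
    using telescope_sums'[OF wl] unfolding step by (simp add: wf_def u_def)
  have s2: "(\<lambda>n. (-q * W / (1+q)) * ((1+q) * (Q^n * u n))) sums ((-q * W / (1+q)) * (2 - X / W))"
    by (rule sums_mult[OF s1])
  have trm: "(-q)^(2*n+1) * qpoch (-(-q)) ((-q)^2) n * qpoch_inf (-((-q)^(2*n+2))) ((-q)^2)
      = (-q * W / (1+q)) * ((1+q) * (Q^n * u n))" for n
  proof -
    have e1: "(-q)^(2*n+1) = -q * Q^n" unfolding Q_def by (simp add: power_add power_mult)
    have e2: "(-q)^2 = Q" unfolding Q_def by simp
    have e3: "-((-q)^(2*n+2)) = -Q * Q^n" unfolding Q_def by (simp add: power_add power_mult power2_eq_square)
    have e4: "qpoch_inf (-Q * Q^n) Q = W / qpoch (-Q) Q n"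
      using qpoch_inf_split[OF nQ, of "-Q" n] qnz[of n] unfolding W_def by (simp add: field_simps)
    have e5: "(-q * W / (1+q)) * ((1+q) * t) = -q * W * t" for t using q1nz by simp
    show ?thesis unfolding e1 e2 e3 e4 e5 u_def by (simp add: divide_inverse ac_simps)
  qed
  have "F_ed_od (-q) = (-q * W / (1+q)) * (2 - X / W)"
    unfolding F_ed_od_def trm using s2 by (simp add: sums_iff)
  then show ?thesis unfolding W_def X_def Q_def by simp
qed



theorem mainTheorem5:
  fixes q :: complex
  assumes "norm q < 1"
  shows "F_ed_od (-q) =
    - (q * qpoch_inf q q * qpoch_inf (- (q^2)) (q^2) / (qpoch_inf (q^2) (q^2))^2) *
      (\<Sum>n. \<Sum>m. (-1) ^ m * q ^ (n*(n+3) div 2 + 2*n*m + 2*m^2 + 2*m) * (1 + q ^ (2*m+1)))"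
proof (cases "q = 0")
  case True
  then show ?thesis by (simp add: F_ed_od_def)
next
  case False
  note q1 = assms and q0 = False
  define V where "V = qpoch_inf q q"
  define W where "W = qpoch_inf (-(q^2)) (q^2)"
  define X where "X = qpoch_inf q (q^2)"
  define Y where "Y = qpoch_inf (q^2) (q^2)"
  define E where "E = qpoch_inf (-q) q"
  define Om where "Om = qpoch_inf (q^2) (q^4)"
  define Z where "Z = qpoch_inf (q^4) (q^4)"
  define T where "T = (\<Sum>m. (-1)^m * q^(2*(m+1)*(m+1)))"
  define H where "H = (\<Sum>n. q^(ee n 0 + 1))"
  define Gs where "Gs = (\<Sum>j. q ^ C (Suc j))"
  define Ss where "Ss = (\<Sum>n. \<Sum>m. (-1) ^ m * q ^ (n*(n+3) div 2 + 2*n*m + 2*m^2 + 2*m) * (1 + q ^ (2*m+1)))"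
  have nQ: "norm (q^2) < 1" using pow_le[OF q1, of 1 2] q1 by simp
  have nQ4: "norm (q^4) < 1" using pow_le[OF q1, of 1 4] q1 by simp
  have nmQ: "norm (-(q^2)) < 1" using nQ by simp
  have q1nz: "1 + q \<noteq> 0"
  proof
    assume "1 + q = 0"
    then have "q = -1" by (simp add: add_eq_0_iff)
    then show False using q1 by simp
  qed
  have Xnz: "X \<noteq> 0" unfolding X_def by (rule qpoch_inf_nonzero[OF nQ q1])
  have Ynz: "Y \<noteq> 0" unfolding Y_def by (rule qpoch_inf_nonzero[OF nQ nQ])
  have Wnz: "W \<noteq> 0" unfolding W_def by (rule qpoch_inf_nonzero[OF nQ nmQ])
  have Znz: "Z \<noteq> 0" unfolding Z_def by (rule qpoch_inf_nonzero[OF nQ4 nQ4])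
  have p1: "(q^2)^2 = q^4" by (simp only: power_mult[symmetric]) simp
  have p2: "q^2 * q^2 = q^4" by (simp only: power_add[symmetric]) simp
  have p3: "q * q = q^2" by (simp add: power2_eq_square)
  have r1: "Y = Om * Z" unfolding Y_def Om_def Z_def using qpoch_inf_double[OF nQ, of "q^2"] unfolding p1 p2 .
  have r2: "Y * W = Z" unfolding Y_def W_def Z_def using qpoch_inf_pm[OF nQ, of "q^2"] unfolding p1 .
  have r3: "V = X * Y" unfolding V_def X_def Y_def using qpoch_inf_double[OF q1, of q] unfolding p3 .
  have r4: "V * E = Y" unfolding V_def E_def Y_def using qpoch_inf_pm[OF q1, of q] .
  have g1: "E * E * V = Gs" unfolding E_def V_def Gs_def using G1[OF q1 q0] .
  have g2: "Om * Om * Z = 1 - 2 * T" unfolding Om_def Z_def T_def using G2[OF q1 q0] .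
  have OW: "Om * W = 1"
  proof -
    have "Z * (Om * W) = Z * 1" using r1 r2 by (simp add: ac_simps)
    then show ?thesis using Znz by simp
  qed
  have XE: "X * E = 1"
  proof -
    have "Y * (X * E) = Y * 1" using r3 r4 by (simp add: ac_simps)
    then show ?thesis using Ynz by simp
  qed
  have th: "1 - 2 * T = Y / W"
  proof -
    have "(1 - 2 * T) * W = Y" unfolding g2[symmetric] r1 using OW by (simp add: ac_simps)
    then show ?thesis using Wnz by (simp add: field_simps)
  qed
  have gs: "Gs = Y / X"
  proof -
    have "Gs * X = Y * ((X*E)*(X*E))" unfolding g1[symmetric] r3 by (simp add: ac_simps)
    then have "Gs * X = Y" using XE by simp
    then show ?thesis using Xnz by (simp add: field_simps)
  qed
  have GH: "Gs = 1 + H"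
  proof -
    have b: "norm (q ^ C (Suc j)) \<le> norm q ^ j" for j by (rule pow_le[OF q1]) simp
    have s: "summable (\<lambda>j. q ^ C (Suc j))" using geo_summable(1)[OF q1 b] .
    have "(\<Sum>j. q ^ C (Suc (Suc j))) = Gs - 1" unfolding Gs_def using suminf_split_head[OF s] by simp
    then show ?thesis unfolding H_def C_SS by simp
  qed
  have SS: "(1+q) * Ss = 2 * H + 1 + 2 * T"
    unfolding Ss_def H_def T_def using S_eval[OF q1] by (simp only: ee_def)
  have Sv: "Ss = (2 * Gs - (1 - 2 * T)) / (1+q)"
    using SS q1nz unfolding GH by (simp add: field_simps)
  have L: "F_ed_od (-q) = -q * W * ((2 - X / W) / (1+q))" unfolding W_def X_def by (rule LHS[OF q1])
  have a1: "(2*(Y/X) - Y/W) * (X*Y*W/Y^2) = 2*W - X"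
    using Xnz Ynz Wnz by (simp add: field_simps power2_eq_square)
  have a2: "W*(2 - X/W) = 2*W - X" using Wnz by (simp add: field_simps)
  have lhs: "-q * W * ((2 - X / W) / (1+q)) = -q * (W*(2 - X/W)) / (1+q)"
    by (simp add: divide_inverse ac_simps)
  have rhs: "- (q * (X*Y) * W / Y^2) * ((2*(Y/X) - Y/W) / (1+q)) = -q * ((2*(Y/X) - Y/W) * (X*Y*W/Y^2)) / (1+q)"
    by (simp add: divide_inverse ac_simps)
  show ?thesis
    unfolding L Ss_def[symmetric] V_def[symmetric] W_def[symmetric] Y_def[symmetric] Sv th gs r3
    unfolding lhs rhs a1 a2 ..
qed


end
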